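(* Let $\mathcal{F}=(I,\mathcal{A}=(A_i)_{i\in I},R,i_0,(\Delta_i,\delta_i)_{i\neq i_0})$ be an interactive family, with $A_i=(\tau_i:(\alpha_i:\mathbf{C}_i\rightharpoondown\mathbf{P}^{L_i})\looparrowright\mathbf{h}_i)$. Let $\mathbf{B}=\mathbf{C}_{i_0}$ and $M=\mathrm{Im}(rb(R))$. Define a graphical multi-dynamics $\beta$ with motor the underlying graph of $\mathbf{B}$ and parameter set $M$ by: for every object $S$ of $\mathbf{B}$, $$S^\beta=\Big\{(a_i)_{i\in I}\in S^{\alpha_{i_0}}\times\prod_{i\neq i_0}(\Delta_iS)^{\alpha_i}\ :\ \forall i\neq i_0,\ \tau_i(a_i)=\delta_i(\tau_{i_0}(a_{i_0}))\Big\},$$ and for every arrow $e:S\to T$ of $\mathbf{B}$, every $a=(a_i)_{i\in I}\in S^\beta$ and every $\mu\in M$, $e^\beta_\mu(a)$ is the set of $b=(b_i)_{i\in I}\in T^\beta$ such that (1) $\tau_{i_0}(b_{i_0})=e^{\mathbf{h}_{i_0}}(\tau_{i_0}(a_{i_0}))$, and (2) there exists $(\mathfrak{a}_i)_{i\in I}\in rb(R)^{-1}(\mu)$ such that for every $i\in I$, $\mathfrak{a}_i\rhd a_i$ and $\mathfrak{a}_i\rhd b_i$. Then $\beta$ is a sub-functorial multi-dynamics $\mathbf{C}_{i_0}\rightharpoondown\mathbf{P}^M$.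
   Context: Transitions: a transition $f:A\rightsquigarrow B$ is a map $A\to\mathcal{P}(B)$; $(g\odot f)(a)=\bigcup_{b\in f(a)}g(b)$; $u\subset v$ means pointwise inclusion; $\mathrm{Id}_A(a)=\{a\}$. Sub-functorial multi-dynamics $\alpha:\mathbf{C}\rightharpoondown\mathbf{P}^L$ ($\mathbf{C}$ small category, $L$ nonempty set): sets $S^\alpha$ for objects $S$, pairwise disjoint, and for each arrow $f:S\to T$ transitions $f^\alpha_\lambda:S^\alpha\rightsquigarrow T^\alpha$ ($\lambda\in L$) with $(\mathrm{Id}_S)^\alpha_\lambda\subset\mathrm{Id}_{S^\alpha}$ and $(g\circ f)^\alpha_\lambda\subset g^\alpha_\lambda\odot f^\alpha_\lambda$. A graphical multi-dynamics is the same data without these two conditions. $st(\alpha)=\bigcup_S S^\alpha$. Clock: a functor $\mathbf{h}:\mathbf{C}\to\mathbf{Sets}$ with $S^{\mathbf{h}}=\mathbf{h}(S)$ pairwise disjoint for distinct objects; its elements (instants) $st(\mathbf{h})=\bigcup_S S^{\mathbf h}$ are preordered by $s\le_{\mathbf h}t$ iff $t=e^{\mathbf h}(s)$ for some arrow $e$. Open sub-functorial dynamics $A=(\tau:(\alpha:\mathbf{C}\rightharpoondown\mathbf{P}^L)\looparrowright\mathbf{h})$: a sub-functorial multi-dynamics $\alpha$, a clock $\mathbf{h}$ on the same $\mathbf{C}$, and a map $\tau:st(\alpha)\to st(\mathbf{h})$ with $\tau(S^\alpha)\subset S^{\mathbf h}$ and, for every arrow $e:S\to T$, $\lambda\in L$,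 $a\in S^\alpha$ and $b\in e^\alpha_\lambda(a)$, $\tau(b)=e^{\mathbf h}(\tau(a))$. Realization of $A$: a pair $(\lambda,\mathfrak{a})$ with $\lambda\in L$ and $\mathfrak{a}$ a partial function from $st(\mathbf h)$ to $st(\alpha)$ with domain $D_{\mathfrak a}$ such that $\tau(\mathfrak a(t))=t$ for $t\in D_{\mathfrak a}$; $\mathfrak a(t)\in S^\alpha$ whenever $t\in S^{\mathbf h}\cap D_{\mathfrak a}$; and for every arrow $f:S\to T$ and $t\in S^{\mathbf h}$, if $f^{\mathbf h}(t)\in D_{\mathfrak a}$ then $t\in D_{\mathfrak a}$ and $\mathfrak a(f^{\mathbf h}(t))\in f^\alpha_\lambda(\mathfrak a(t))$. $\mathfrak a$ is the external part; $\mathcal{S}^*_{(A,\lambda)}$ denotes the set of nonempty external parts of realizations with parameter $\lambda$, and $\mathcal{S}^*_A=\bigcup_\lambda\mathcal{S}^*_{(A,\lambda)}$. $A$ is efficient if $\mathcal{S}^*_A\neq\emptyset$. $\mathfrak a\rhd a$ ("passes through the state $a$") means $\tau(a)\in D_{\mathfrak a}$ and $\mathfrak a(\tau(a))=a$. Interaction: for a family $\mathcal{A}=(A_i)_{i\in I}$ ($I\neq\emptyset$) of efficient open sub-functorial dynamics with parameter sets $L_i$ and $\mathcal{S}^*_i=\mathcal{S}^*_{A_i}$, a configuration is a family $((\sigma_i,\lambda_i))_{i\in I}$ with $\lambda_i\in L_i$ and $\sigma_i\in\mathcal{S}^*_{(A_i,\lambda_i)}$ for all $i$. An interaction $R$ is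 a nonempty set of configurations. $rb(R)$ is the binary relation from $\prod_i\mathcal{S}^*_i$ to $\prod_iL_i$ relating $(\sigma_i)_i$ to $(\lambda_i)_i$ iff $((\sigma_i,\lambda_i))_i\in R$; $\mathrm{Im}(rb(R))$ is the set of $(\lambda_i)_i$ so related to some $(\sigma_i)_i$, and $rb(R)^{-1}(\mu)$ is the set of $(\sigma_i)_i$ related to $\mu$. Synchronization of $A_1$ by $A_0$ (written $(\Delta_1,\delta_1):\mathbf h_0\Rsh\mathbf h_1$): a map $\Delta_1$ from objects of $\mathbf{C}_0$ to objects of $\mathbf{C}_1$ and a map $\delta_1:st(\mathbf h_0)\to st(\mathbf h_1)$ with $\delta_1(S^{\mathbf h_0})\subset(\Delta_1S)^{\mathbf h_1}$ for every object $S$, and $\delta_1$ monotone (either $s\le_{\mathbf h_0}t\Rightarrow\delta_1(s)\le_{\mathbf h_1}\delta_1(t)$ for all $s,t$, or $s\le_{\mathbf h_0}t\Rightarrow\delta_1(t)\le_{\mathbf h_1}\delta_1(s)$ for all $s,t$). Interactive family $(I,\mathcal A,R,i_0,(\Delta_i,\delta_i)_{i\neq i_0})$: nonempty set $I$, family $\mathcal A=(A_i)_{i\in I}$ of efficient open sub-functorial dynamics, an interaction $R$ for $\mathcal A$, an index $i_0\in I$, and synchronizations $(\Delta_i,\delta_i):\mathbf h_{i_0}\Rsh\mathbf h_i$ for $i\neq i_0$. *)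

theory Defs
  imports "HOL-Library.FuncSet"
begin

record ('o, 'm) cat =
  cObj  :: "'o set"
  cArr  :: "'m set"
  cDom  :: "'m \<Rightarrow> 'o"
  cCod  :: "'m \<Rightarrow> 'o"
  cComp :: "'m \<Rightarrow> 'm \<Rightarrow> 'm"   (* cComp C g f = g o f *)
  cId   :: "'o \<Rightarrow> 'm"

definition category :: "('o, 'm) cat \<Rightarrow> bool" where
  "category C \<longleftrightarrow>
     (\<forall>f\<in>cArr C. cDom C f \<in> cObj C \<and> cCod C f \<in> cObj C) \<and>
     (\<forall>S\<in>cObj C. cId C S \<in> cArr C \<and> cDom C (cId C S) = S \<and> cCod C (cId C S) = S) \<and>
     (\<forall>f\<in>cArr C. \<forall>g\<in>cArr C. cCod C f = cDom C g \<longrightarrow>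
        cComp C g f \<in> cArr C \<and> cDom C (cComp C g f) = cDom C f \<and> cCod C (cComp C g f) = cCod C g) \<and>
     (\<forall>f\<in>cArr C. cComp C f (cId C (cDom C f)) = f \<and> cComp C (cId C (cCod C f)) f = f) \<and>
     (\<forall>f\<in>cArr C. \<forall>g\<in>cArr C. \<forall>h\<in>cArr C. cCod C f = cDom C g \<longrightarrow> cCod C g = cDom C h \<longrightarrow>
        cComp C h (cComp C g f) = cComp C (cComp C h g) f)"

definition pairwise_disjoint_on :: "('o, 'm) cat \<Rightarrow> ('o \<Rightarrow> 'x set) \<Rightarrow> bool" where
  "pairwise_disjoint_on C X \<longleftrightarrow>
     (\<forall>S\<in>cObj C. \<forall>T\<in>cObj C. S \<noteq> T \<longrightarrow> X S \<inter> X T = {})"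

definition graphical_md ::
  "('o, 'm) cat \<Rightarrow> 'l set \<Rightarrow> ('o \<Rightarrow> 's set) \<Rightarrow> ('m \<Rightarrow> 'l \<Rightarrow> 's \<Rightarrow> 's set) \<Rightarrow> bool" where
  "graphical_md C L St Tr \<longleftrightarrow>
     category C \<and> L \<noteq> {} \<and> pairwise_disjoint_on C St \<and>
     (\<forall>e\<in>cArr C. \<forall>l\<in>L. \<forall>a\<in>St (cDom C e). Tr e l a \<subseteq> St (cCod C e))"

definition subfunctorial_md ::
  "('o, 'm) cat \<Rightarrow> 'l set \<Rightarrow> ('o \<Rightarrow> 's set) \<Rightarrow> ('m \<Rightarrow> 'l \<Rightarrow> 's \<Rightarrow> 's set) \<Rightarrow> bool" where
  "subfunctorial_md C L St Tr \<longleftrightarrow>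
     graphical_md C L St Tr \<and>
     (\<forall>S\<in>cObj C. \<forall>l\<in>L. \<forall>a\<in>St S. Tr (cId C S) l a \<subseteq> {a}) \<and>
     (\<forall>f\<in>cArr C. \<forall>g\<in>cArr C. cCod C f = cDom C g \<longrightarrow>
        (\<forall>l\<in>L. \<forall>a\<in>St (cDom C f). Tr (cComp C g f) l a \<subseteq> (\<Union>b\<in>Tr f l a. Tr g l b)))"

definition clock :: "('o, 'm) cat \<Rightarrow> ('o \<Rightarrow> 't set) \<Rightarrow> ('m \<Rightarrow> 't \<Rightarrow> 't) \<Rightarrow> bool" where
  "clock C hS hA \<longleftrightarrow>
     pairwise_disjoint_on C hS \<and>
     (\<forall>e\<in>cArr C. \<forall>t\<in>hS (cDom C e). hA e t \<in> hS (cCod C e)) \<and>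
     (\<forall>S\<in>cObj C. \<forall>t\<in>hS S. hA (cId C S) t = t) \<and>
     (\<forall>f\<in>cArr C. \<forall>g\<in>cArr C. cCod C f = cDom C g \<longrightarrow>
        (\<forall>t\<in>hS (cDom C f). hA (cComp C g f) t = hA g (hA f t)))"

definition clock_st :: "('o, 'm) cat \<Rightarrow> ('o \<Rightarrow> 't set) \<Rightarrow> 't set" where
  "clock_st C hS = (\<Union>S\<in>cObj C. hS S)"

definition clock_le :: "('o, 'm) cat \<Rightarrow> ('o \<Rightarrow> 't set) \<Rightarrow> ('m \<Rightarrow> 't \<Rightarrow> 't) \<Rightarrow> 't \<Rightarrow> 't \<Rightarrow> bool" where
  "clock_le C hS hA s t \<longleftrightarrow> (\<exists>e\<in>cArr C. s \<in> hS (cDom C e) \<and> t = hA e s)"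

record ('o, 'm, 's, 't, 'l) odyn =
  Cat  :: "('o, 'm) cat"
  Par  :: "'l set"
  St   :: "'o \<Rightarrow> 's set"
  Tr   :: "'m \<Rightarrow> 'l \<Rightarrow> 's \<Rightarrow> 's set"
  ClkS :: "'o \<Rightarrow> 't set"
  ClkA :: "'m \<Rightarrow> 't \<Rightarrow> 't"
  Tau  :: "'s \<Rightarrow> 't"

definition ostates :: "('o, 'm, 's, 't, 'l) odyn \<Rightarrow> 's set" where
  "ostates A = (\<Union>S\<in>cObj (Cat A). St A S)"

definition oinstants :: "('o, 'm, 's, 't, 'l) odyn \<Rightarrow> 't set" where
  "oinstants A = clock_st (Cat A) (ClkS A)"

definition open_dyn :: "('o, 'm, 's, 't, 'l) odyn \<Rightarrow> bool" where
  "open_dyn A \<longleftrightarrow>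
     subfunctorial_md (Cat A) (Par A) (St A) (Tr A) \<and>
     clock (Cat A) (ClkS A) (ClkA A) \<and>
     (\<forall>S\<in>cObj (Cat A). Tau A ` St A S \<subseteq> ClkS A S) \<and>
     (\<forall>e\<in>cArr (Cat A). \<forall>l\<in>Par A. \<forall>a\<in>St A (cDom (Cat A) e). \<forall>b\<in>Tr A e l a.
        Tau A b = ClkA A e (Tau A a))"

definition realization :: "('o, 'm, 's, 't, 'l) odyn \<Rightarrow> 'l \<Rightarrow> ('t \<rightharpoonup> 's) \<Rightarrow> bool" where
  "realization A l a \<longleftrightarrow>
     l \<in> Par A \<and>
     dom a \<subseteq> oinstants A \<and> ran a \<subseteq> ostates A \<and>
     (\<forall>t\<in>dom a. Tau A (the (a t)) = t) \<and>
     (\<forall>S\<in>cObj (Cat A). \<forall>t\<in>ClkS A S \<inter> dom a. the (a t) \<in> St A S) \<and>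
     (\<forall>f\<in>cArr (Cat A). \<forall>t\<in>ClkS A (cDom (Cat A) f).
        ClkA A f t \<in> dom a \<longrightarrow>
          t \<in> dom a \<and> the (a (ClkA A f t)) \<in> Tr A f l (the (a t)))"

definition ext_parts :: "('o, 'm, 's, 't, 'l) odyn \<Rightarrow> 'l \<Rightarrow> ('t \<rightharpoonup> 's) set" where
  "ext_parts A l = {a. realization A l a \<and> dom a \<noteq> {}}"

definition all_ext_parts :: "('o, 'm, 's, 't, 'l) odyn \<Rightarrow> ('t \<rightharpoonup> 's) set" where
  "all_ext_parts A = (\<Union>l\<in>Par A. ext_parts A l)"

definition efficient :: "('o, 'm, 's, 't, 'l) odyn \<Rightarrow> bool" where
  "efficient A \<longleftrightarrow> all_ext_parts A \<noteq> {}"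

definition passes :: "('o, 'm, 's, 't, 'l) odyn \<Rightarrow> ('t \<rightharpoonup> 's) \<Rightarrow> 's \<Rightarrow> bool" where
  "passes A a x \<longleftrightarrow> Tau A x \<in> dom a \<and> a (Tau A x) = Some x"

definition configuration ::
  "'i set \<Rightarrow> ('i \<Rightarrow> ('o, 'm, 's, 't, 'l) odyn) \<Rightarrow> ('i \<Rightarrow> ('t \<rightharpoonup> 's) \<times> 'l) \<Rightarrow> bool" where
  "configuration I A c \<longleftrightarrow>
     c \<in> extensional I \<and>
     (\<forall>i\<in>I. snd (c i) \<in> Par (A i) \<and> fst (c i) \<in> ext_parts (A i) (snd (c i)))"

definition interaction ::
  "'i set \<Rightarrow> ('i \<Rightarrow> ('o, 'm, 's, 't, 'l) odyn) \<Rightarrow> ('i \<Rightarrow> ('t \<rightharpoonup> 's) \<times> 'l) set \<Rightarrow> bool" where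
  "interaction I A R \<longleftrightarrow> R \<noteq> {} \<and> (\<forall>c\<in>R. configuration I A c)"

definition rb_image :: "'i set \<Rightarrow> ('i \<Rightarrow> ('t \<rightharpoonup> 's) \<times> 'l) set \<Rightarrow> ('i \<Rightarrow> 'l) set" where
  "rb_image I R = {mu. \<exists>sigma. (\<lambda>i\<in>I. (sigma i, mu i)) \<in> R \<and> sigma \<in> extensional I \<and> mu \<in> extensional I}"

definition rb_preimage :: "'i set \<Rightarrow> ('i \<Rightarrow> ('t \<rightharpoonup> 's) \<times> 'l) set \<Rightarrow> ('i \<Rightarrow> 'l) \<Rightarrow> ('i \<Rightarrow> ('t \<rightharpoonup> 's)) set" where
  "rb_preimage I R mu = {sigma. sigma \<in> extensional I \<and> (\<lambda>i\<in>I. (sigma i, mu i)) \<in> R}"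

definition synchronization ::
  "('o, 'm, 's, 't, 'l) odyn \<Rightarrow> ('o, 'm, 's, 't, 'l) odyn \<Rightarrow> ('o \<Rightarrow> 'o) \<Rightarrow> ('t \<Rightarrow> 't) \<Rightarrow> bool" where
  "synchronization A0 A1 Delta delta \<longleftrightarrow>
     (\<forall>S\<in>cObj (Cat A0). Delta S \<in> cObj (Cat A1)) \<and>
     (\<forall>t\<in>oinstants A0. delta t \<in> oinstants A1) \<and>
     (\<forall>S\<in>cObj (Cat A0). delta ` ClkS A0 S \<subseteq> ClkS A1 (Delta S)) \<and>
     ((\<forall>s\<in>oinstants A0. \<forall>t\<in>oinstants A0.
         clock_le (Cat A0) (ClkS A0) (ClkA A0) s t \<longrightarrow>
         clock_le (Cat A1) (ClkS A1) (ClkA A1) (delta s) (delta t)) \<or>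
      (\<forall>s\<in>oinstants A0. \<forall>t\<in>oinstants A0.
         clock_le (Cat A0) (ClkS A0) (ClkA A0) s t \<longrightarrow>
         clock_le (Cat A1) (ClkS A1) (ClkA A1) (delta t) (delta s)))"

definition interactive_family ::
  "'i set \<Rightarrow> ('i \<Rightarrow> ('o, 'm, 's, 't, 'l) odyn) \<Rightarrow> ('i \<Rightarrow> ('t \<rightharpoonup> 's) \<times> 'l) set \<Rightarrow> 'i \<Rightarrow>
   ('i \<Rightarrow> 'o \<Rightarrow> 'o) \<Rightarrow> ('i \<Rightarrow> 't \<Rightarrow> 't) \<Rightarrow> bool" where
  "interactive_family I A R i0 Delta delta \<longleftrightarrow>
     I \<noteq> {} \<and>
     (\<forall>i\<in>I. open_dyn (A i) \<and> efficient (A i)) \<and>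
     interaction I A R \<and>
     i0 \<in> I \<and>
     (\<forall>i\<in>I - {i0}. synchronization (A i0) (A i) (Delta i) (delta i))"

definition beta_St ::
  "'i set \<Rightarrow> ('i \<Rightarrow> ('o, 'm, 's, 't, 'l) odyn) \<Rightarrow> 'i \<Rightarrow> ('i \<Rightarrow> 'o \<Rightarrow> 'o) \<Rightarrow> ('i \<Rightarrow> 't \<Rightarrow> 't) \<Rightarrow>
   'o \<Rightarrow> ('i \<Rightarrow> 's) set" where
  "beta_St I A i0 Delta delta S =
     {a \<in> (\<Pi>\<^sub>E i\<in>I. if i = i0 then St (A i0) S else St (A i) (Delta i S)).
        \<forall>i\<in>I - {i0}. Tau (A i) (a i) = delta i (Tau (A i0) (a i0))}"

definition beta_Tr ::
  "'i set \<Rightarrow> ('i \<Rightarrow> ('o, 'm, 's, 't, 'l) odyn) \<Rightarrow> ('i \<Rightarrow> ('t \<rightharpoonup> 's) \<times> 'l) set \<Rightarrow> 'i \<Rightarrow>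
   ('i \<Rightarrow> 'o \<Rightarrow> 'o) \<Rightarrow> ('i \<Rightarrow> 't \<Rightarrow> 't) \<Rightarrow> 'm \<Rightarrow> ('i \<Rightarrow> 'l) \<Rightarrow> ('i \<Rightarrow> 's) \<Rightarrow> ('i \<Rightarrow> 's) set" where
  "beta_Tr I A R i0 Delta delta e mu a =
     {b \<in> beta_St I A i0 Delta delta (cCod (Cat (A i0)) e).
        Tau (A i0) (b i0) = ClkA (A i0) e (Tau (A i0) (a i0)) \<and>
        (\<exists>sigma\<in>rb_preimage I R mu.
           \<forall>i\<in>I. passes (A i) (sigma i) (a i) \<and> passes (A i) (sigma i) (b i))}"

end

theory Submission
  imports Defs
begin

lemma sigma_real:
  assumes "interaction I A R" "sigma \<in> rb_preimage I R mu" "i \<in> I"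
  shows "realization (A i) (mu i) (sigma i)"
proof -
  have "(\<lambda>i\<in>I. (sigma i, mu i)) \<in> R" using assms(2) by (simp add: rb_preimage_def)
  then have "configuration I A (\<lambda>i\<in>I. (sigma i, mu i))" using assms(1) by (simp add: interaction_def)
  then show ?thesis using assms(3) by (simp add: configuration_def ext_parts_def)
qed

lemma rb_image_ne:
  assumes "interaction I A R"
  shows "rb_image I R \<noteq> {}"
proof -
  obtain c where c: "c \<in> R" using assms by (auto simp: interaction_def)
  then have ce: "c \<in> extensional I" using assms by (auto simp: interaction_def configuration_def)
  have "(\<lambda>i\<in>I. (fst (c i), snd (c i))) = c"
    using ce by (auto simp: extensional_def)
  then have "(\<lambda>i\<in>I. snd (c i)) \<in> rb_image I R"
    unfolding rb_image_def using c
    apply (intro CollectI exI[of _ "\<lambda>i\<in>I. fst (c i)"])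
    apply (subgoal_tac "(\<lambda>i\<in>I. (restrict (\<lambda>i. fst (c i)) I i, restrict (\<lambda>i. snd (c i)) I i)) = (\<lambda>i\<in>I. (fst (c i), snd (c i)))")
     apply simp
    by (rule restrict_ext) simp
  then show ?thesis by blast
qed

lemma beta_mem0:
  assumes "a \<in> beta_St I A i0 Delta delta S" "i0 \<in> I"
  shows "a i0 \<in> St (A i0) S"
proof -
  have "a \<in> (\<Pi>\<^sub>E i\<in>I. if i = i0 then St (A i0) S else St (A i) (Delta i S))"
    using assms(1) unfolding beta_St_def by blast
  then have "a i0 \<in> (if i0 = i0 then St (A i0) S else St (A i0) (Delta i0 S))"
    using assms(2) by (rule PiE_mem)
  then show ?thesis by simp
qed

lemma real_St:
  assumes "realization B l s" "S \<in> cObj (Cat B)" "t \<in> ClkS B S" "t \<in> dom s"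
  shows "the (s t) \<in> St B S" "Tau B (the (s t)) = t" "passes B s (the (s t))"
  using assms by (auto simp: realization_def passes_def)

lemma real_down:
  assumes "realization B l s" "clock_le (Cat B) (ClkS B) (ClkA B) t u" "u \<in> dom s"
  shows "t \<in> dom s"
proof -
  obtain e where e: "e \<in> cArr (Cat B)" "t \<in> ClkS B (cDom (Cat B) e)" "u = ClkA B e t"
    using assms(2) unfolding clock_le_def by blast
  have "\<forall>f\<in>cArr (Cat B). \<forall>t\<in>ClkS B (cDom (Cat B) f).
        ClkA B f t \<in> dom s \<longrightarrow> t \<in> dom s \<and> the (s (ClkA B f t)) \<in> Tr B f l (the (s t))"
    using assms(1) unfolding realization_def by (elim conjE)
  then show ?thesis using e assms(3) by auto
qed

theorem mainTheorem3:
  assumes "interactive_family I A R i0 Delta delta"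
  shows "subfunctorial_md (Cat (A i0)) (rb_image I R)
           (beta_St I A i0 Delta delta) (beta_Tr I A R i0 Delta delta)"
proof -
  have I0: "i0 \<in> I" and OD: "\<And>i. i \<in> I \<Longrightarrow> open_dyn (A i)" and RR: "interaction I A R"
    and SY: "\<And>i. i \<in> I - {i0} \<Longrightarrow> synchronization (A i0) (A i) (Delta i) (delta i)"
    using assms by (auto simp: interactive_family_def)
  define C where "C = Cat (A i0)"
  have OD0: "open_dyn (A i0)" using OD I0 by blast
  have cat: "category C" using OD0 by (simp add: C_def open_dyn_def subfunctorial_md_def graphical_md_def)
  have disj0: "pairwise_disjoint_on C (St (A i0))"
    using OD0 by (simp add: C_def open_dyn_def subfunctorial_md_def graphical_md_def)
  have clk: "clock C (ClkS (A i0)) (ClkA (A i0))" using OD0 by (simp add: C_def open_dyn_def)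
  have tau0: "\<And>S x. S \<in> cObj C \<Longrightarrow> x \<in> St (A i0) S \<Longrightarrow> Tau (A i0) x \<in> ClkS (A i0) S"
    using OD0 by (auto simp: C_def open_dyn_def)
  have G: "graphical_md C (rb_image I R) (beta_St I A i0 Delta delta) (beta_Tr I A R i0 Delta delta)"
    unfolding graphical_md_def
  proof (intro conjI)
    show "category C" by fact
    show "rb_image I R \<noteq> {}" using rb_image_ne[OF RR] .
    show "pairwise_disjoint_on C (beta_St I A i0 Delta delta)"
      unfolding pairwise_disjoint_on_def
    proof (intro ballI impI)
      fix S T assume ST: "S \<in> cObj C" "T \<in> cObj C" "S \<noteq> T"
      show "beta_St I A i0 Delta delta S \<inter> beta_St I A i0 Delta delta T = {}"
      proof (rule ccontr)
        assume "beta_St I A i0 Delta delta S \<inter> beta_St I A i0 Delta delta T \<noteq> {}"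
        then obtain a where "a \<in> beta_St I A i0 Delta delta S" "a \<in> beta_St I A i0 Delta delta T" by blast
        then have "a i0 \<in> St (A i0) S" "a i0 \<in> St (A i0) T" using I0
          by (auto intro: beta_mem0)
        then show False using disj0 ST unfolding pairwise_disjoint_on_def by blast
      qed
    qed
    show "\<forall>e\<in>cArr C. \<forall>l\<in>rb_image I R. \<forall>a\<in>beta_St I A i0 Delta delta (cDom C e).
            beta_Tr I A R i0 Delta delta e l a \<subseteq> beta_St I A i0 Delta delta (cCod C e)"
      by (auto simp: beta_Tr_def C_def)
  qed
  have ID: "\<forall>S\<in>cObj C. \<forall>l\<in>rb_image I R. \<forall>a\<in>beta_St I A i0 Delta delta S.
        beta_Tr I A R i0 Delta delta (cId C S) l a \<subseteq> {a}"
  proof (intro ballI subsetI)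
    fix S l a b assume S: "S \<in> cObj C" and l: "l \<in> rb_image I R" and a: "a \<in> beta_St I A i0 Delta delta S"
      and b: "b \<in> beta_Tr I A R i0 Delta delta (cId C S) l a"
    have codS: "cCod C (cId C S) = S" using cat S by (simp add: category_def)
    from b have bS: "b \<in> beta_St I A i0 Delta delta S"
      and tb: "Tau (A i0) (b i0) = ClkA (A i0) (cId C S) (Tau (A i0) (a i0))"
      and "\<exists>sigma\<in>rb_preimage I R l. \<forall>i\<in>I. passes (A i) (sigma i) (a i) \<and> passes (A i) (sigma i) (b i)"
      using codS by (auto simp: beta_Tr_def C_def)
    then obtain sigma where sp: "\<And>i. i \<in> I \<Longrightarrow> passes (A i) (sigma i) (a i) \<and> passes (A i) (sigma i) (b i)"
      by blast
    have a0: "a i0 \<in> St (A i0) S" using a I0 by (rule beta_mem0)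
    have "Tau (A i0) (b i0) = Tau (A i0) (a i0)"
      using tb tau0[OF S a0] clk S by (simp add: clock_def)
    then have tt: "\<And>i. i \<in> I \<Longrightarrow> Tau (A i) (b i) = Tau (A i) (a i)"
    proof -
      fix i assume i: "i \<in> I"
      show "Tau (A i) (b i) = Tau (A i) (a i)"
      proof (cases "i = i0")
        case True then show ?thesis using \<open>Tau (A i0) (b i0) = Tau (A i0) (a i0)\<close> by simp
      next
        case False
        have "\<forall>i\<in>I - {i0}. Tau (A i) (a i) = delta i (Tau (A i0) (a i0))"
          using a unfolding beta_St_def by blast
        moreover have "\<forall>i\<in>I - {i0}. Tau (A i) (b i) = delta i (Tau (A i0) (b i0))"
          using bS unfolding beta_St_def by blast
        ultimately show ?thesis using i False \<open>Tau (A i0) (b i0) = Tau (A i0) (a i0)\<close> by simp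
      qed
    qed
    have "\<And>i. i \<in> I \<Longrightarrow> b i = a i"
    proof -
      fix i assume i: "i \<in> I"
      from sp[OF i] tt[OF i] have "Some (b i) = Some (a i)" unfolding passes_def by metis
      then show "b i = a i" by simp
    qed
    moreover have "a \<in> extensional I" "b \<in> extensional I" using a bS by (auto simp: beta_St_def PiE_def)
    ultimately have "b = a" by (metis extensionalityI)
    then show "b \<in> {a}" by simp
  qed
  have COMP: "\<forall>f\<in>cArr C. \<forall>g\<in>cArr C. cCod C f = cDom C g \<longrightarrow>
        (\<forall>l\<in>rb_image I R. \<forall>a\<in>beta_St I A i0 Delta delta (cDom C f).
           beta_Tr I A R i0 Delta delta (cComp C g f) l a \<subseteq>
           (\<Union>c\<in>beta_Tr I A R i0 Delta delta f l a. beta_Tr I A R i0 Delta delta g l c))"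
  proof (intro ballI impI subsetI)
    fix f g l a b assume f: "f \<in> cArr C" and g: "g \<in> cArr C" and fg: "cCod C f = cDom C g"
      and l: "l \<in> rb_image I R" and a: "a \<in> beta_St I A i0 Delta delta (cDom C f)"
      and b: "b \<in> beta_Tr I A R i0 Delta delta (cComp C g f) l a"
    have objs: "cDom C f \<in> cObj C" "cCod C f \<in> cObj C" "cCod C g \<in> cObj C"
      using cat f g by (auto simp: category_def)
    have codgf: "cCod C (cComp C g f) = cCod C g" using cat f g fg by (simp add: category_def)
    from b have bS: "b \<in> beta_St I A i0 Delta delta (cCod C g)"
      and tb: "Tau (A i0) (b i0) = ClkA (A i0) (cComp C g f) (Tau (A i0) (a i0))"
      and "\<exists>sigma\<in>rb_preimage I R l. \<forall>i\<in>I. passes (A i) (sigma i) (a i) \<and> passes (A i) (sigma i) (b i)"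
      using codgf by (auto simp: beta_Tr_def C_def)
    then obtain sigma where sig: "sigma \<in> rb_preimage I R l"
      and sp: "\<And>i. i \<in> I \<Longrightarrow> passes (A i) (sigma i) (a i) \<and> passes (A i) (sigma i) (b i)"
      by blast
    have real: "\<And>i. i \<in> I \<Longrightarrow> realization (A i) (l i) (sigma i)"
      using sigma_real[OF RR sig] .
    have a0: "a i0 \<in> St (A i0) (cDom C f)" using a I0 by (rule beta_mem0)
    have ta0: "Tau (A i0) (a i0) \<in> ClkS (A i0) (cDom C f)" using tau0[OF objs(1) a0] .
    define t0 where "t0 = ClkA (A i0) f (Tau (A i0) (a i0))"
    have t0S: "t0 \<in> ClkS (A i0) (cCod C f)" using clk f ta0 by (auto simp: clock_def t0_def)
    have tbg: "Tau (A i0) (b i0) = ClkA (A i0) g t0"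
      using tb clk f g fg ta0 by (simp add: clock_def t0_def)
    have tbS: "Tau (A i0) (b i0) \<in> ClkS (A i0) (cCod C g)" using clk g t0S fg tbg by (auto simp: clock_def)
    have le1: "clock_le C (ClkS (A i0)) (ClkA (A i0)) (Tau (A i0) (a i0)) t0"
      using f ta0 by (auto simp: clock_le_def t0_def)
    have le2: "clock_le C (ClkS (A i0)) (ClkA (A i0)) t0 (Tau (A i0) (b i0))"
      using g t0S fg tbg by (auto simp: clock_le_def)
    have inst: "Tau (A i0) (a i0) \<in> oinstants (A i0)" "t0 \<in> oinstants (A i0)"
       "Tau (A i0) (b i0) \<in> oinstants (A i0)"
      using ta0 t0S tbS objs by (auto simp: oinstants_def clock_st_def C_def)
    have pb0: "passes (A i0) (sigma i0) (b i0)" using sp I0 by blast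
    have t0dom: "t0 \<in> dom (sigma i0)"
      using real_down[OF real[OF I0], of t0 "Tau (A i0) (b i0)"] le2 pb0
      by (simp add: passes_def C_def)
    have tdi: "delta i t0 \<in> dom (sigma i)" if i: "i \<in> I - {i0}" for i
    proof -
      have syn: "synchronization (A i0) (A i) (Delta i) (delta i)" using SY i .
      have ab: "Tau (A i) (a i) = delta i (Tau (A i0) (a i0))" "Tau (A i) (b i) = delta i (Tau (A i0) (b i0))"
        using a bS i by (auto simp: beta_St_def)
      have pa: "passes (A i) (sigma i) (a i)" "passes (A i) (sigma i) (b i)" using sp i by auto
      have mono: "(\<forall>s\<in>oinstants (A i0). \<forall>t\<in>oinstants (A i0).
         clock_le (Cat (A i0)) (ClkS (A i0)) (ClkA (A i0)) s t \<longrightarrow>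
         clock_le (Cat (A i)) (ClkS (A i)) (ClkA (A i)) (delta i s) (delta i t)) \<or>
      (\<forall>s\<in>oinstants (A i0). \<forall>t\<in>oinstants (A i0).
         clock_le (Cat (A i0)) (ClkS (A i0)) (ClkA (A i0)) s t \<longrightarrow>
         clock_le (Cat (A i)) (ClkS (A i)) (ClkA (A i)) (delta i t) (delta i s))"
        using syn unfolding synchronization_def by (elim conjE)
      have le1': "clock_le (Cat (A i0)) (ClkS (A i0)) (ClkA (A i0)) (Tau (A i0) (a i0)) t0"
        and le2': "clock_le (Cat (A i0)) (ClkS (A i0)) (ClkA (A i0)) t0 (Tau (A i0) (b i0))"
        using le1 le2 unfolding C_def .
      from mono consider
        "clock_le (Cat (A i)) (ClkS (A i)) (ClkA (A i)) (delta i t0) (delta i (Tau (A i0) (b i0)))"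
      | "clock_le (Cat (A i)) (ClkS (A i)) (ClkA (A i)) (delta i t0) (delta i (Tau (A i0) (a i0)))"
      proof (elim disjE)
        assume m: "\<forall>s\<in>oinstants (A i0). \<forall>t\<in>oinstants (A i0).
         clock_le (Cat (A i0)) (ClkS (A i0)) (ClkA (A i0)) s t \<longrightarrow>
         clock_le (Cat (A i)) (ClkS (A i)) (ClkA (A i)) (delta i s) (delta i t)"
        assume h: "clock_le (Cat (A i)) (ClkS (A i)) (ClkA (A i)) (delta i t0) (delta i (Tau (A i0) (b i0))) \<Longrightarrow> thesis"
        show thesis by (rule h) (use m inst le2' in blast)
      next
        assume m: "\<forall>s\<in>oinstants (A i0). \<forall>t\<in>oinstants (A i0).
         clock_le (Cat (A i0)) (ClkS (A i0)) (ClkA (A i0)) s t \<longrightarrow>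
         clock_le (Cat (A i)) (ClkS (A i)) (ClkA (A i)) (delta i t) (delta i s)"
        assume h: "clock_le (Cat (A i)) (ClkS (A i)) (ClkA (A i)) (delta i t0) (delta i (Tau (A i0) (a i0))) \<Longrightarrow> thesis"
        show thesis by (rule h) (use m inst le1' in blast)
      qed
      then show ?thesis
      proof cases
        case 1 then show ?thesis using real_down[OF real[of i]] i ab pa by (auto simp: passes_def)
      next
        case 2 then show ?thesis using real_down[OF real[of i]] i ab pa by (auto simp: passes_def)
      qed
    qed
    define c where "c = (\<lambda>i\<in>I. if i = i0 then the (sigma i0 t0) else the (sigma i (delta i t0)))"
    have c0: "c i0 \<in> St (A i0) (cCod C f)" "Tau (A i0) (c i0) = t0" "passes (A i0) (sigma i0) (c i0)"
      using real_St[OF real[OF I0] _ t0S t0dom] objs I0 by (auto simp: c_def C_def)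
    have ci: "c i \<in> St (A i) (Delta i (cCod C f)) \<and> Tau (A i) (c i) = delta i t0 \<and> passes (A i) (sigma i) (c i)"
      if i: "i \<in> I - {i0}" for i
    proof -
      have syn: "synchronization (A i0) (A i) (Delta i) (delta i)" using SY i .
      have o: "Delta i (cCod C f) \<in> cObj (Cat (A i))" using syn objs by (simp add: synchronization_def C_def)
      have "\<forall>S\<in>cObj (Cat (A i0)). delta i ` ClkS (A i0) S \<subseteq> ClkS (A i) (Delta i S)"
        using syn unfolding synchronization_def by (elim conjE)
      then have t: "delta i t0 \<in> ClkS (A i) (Delta i (cCod C f))" using objs t0S
        unfolding C_def by blast
      show ?thesis using real_St[OF real[of i] o t tdi[OF i]] i by (auto simp: c_def)
    qed
    have cS: "c \<in> beta_St I A i0 Delta delta (cCod C f)"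
      unfolding beta_St_def using c0 ci I0 by (auto simp: c_def PiE_def Pi_def extensional_def)
    have pc: "\<And>i. i \<in> I \<Longrightarrow> passes (A i) (sigma i) (c i)" using c0 ci by (metis DiffI singletonD)
    have cT: "c \<in> beta_Tr I A R i0 Delta delta f l a"
      unfolding beta_Tr_def using cS c0 sig sp pc by (auto simp: t0_def C_def)
    have bT: "b \<in> beta_Tr I A R i0 Delta delta g l c"
      unfolding beta_Tr_def using bS fg tbg c0 sig sp pc by (auto simp: C_def)
    show "b \<in> (\<Union>c\<in>beta_Tr I A R i0 Delta delta f l a. beta_Tr I A R i0 Delta delta g l c)"
      using cT bT by blast
  qed
  show ?thesis unfolding subfunctorial_md_def C_def[symmetric] using G ID COMP by blast
qed

end
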